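(* All $(\mathfrak g,K)$-modules $\mathfrak F_\beta$ with $\beta\in\mathbb C$, $\beta\ne0$, are isomorphic.
   Context: $G=\mathrm{SU}(2,1)=\{g\in\mathrm{SL}_3(\mathbb C):\bar g^t\,\mathrm{diag}(1,1,-1)\,g=\mathrm{diag}(1,1,-1)\}$ with maximal compact subgroup $K$ (the block-diagonal elements with blocks of sizes $2,1$) and unipotent subgroup $N=\{n(b,r)=\begin{pmatrix}1+ir-\frac{|b|^2}2&b&-ir+\frac{|b|^2}2\\-\bar b&1&\bar b\\ ir-\frac{|b|^2}2&b&1-ir+\frac{|b|^2}2\end{pmatrix}:b\in\mathbb C,r\in\mathbb R\}$. $\chi_\beta(n(b,r))=e^{2\pi i\,\mathrm{Re}(\bar\beta b)}$. $\mathfrak F_\beta$ is the space of smooth right-$K$-finite functions $F$ on $G$ with $F(ng)=\chi_\beta(n)F(g)$ for $n\in N$, $g\in G$, a $(\mathfrak g,K)$-module under right translation by $K$ and right differentiation by the Lie algebra $\mathfrak g$ of $G$. *)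

theory Defs
  imports "HOL-Analysis.Analysis"
begin

type_synonym mat3 = "complex^3^3"

definition idx3 :: "3 \<Rightarrow> nat" where
  "idx3 i = (if i = 1 then 0 else if i = 2 then 1 else 2)"

definition m3 :: "complex list list \<Rightarrow> mat3" where
  "m3 xs = (\<chi> i j. xs ! idx3 i ! idx3 j)"

definition Jmat :: mat3 where
  "Jmat = m3 [[1,0,0],[0,1,0],[0,0,-1]]"

definition conj_transpose :: "mat3 \<Rightarrow> mat3" where
  "conj_transpose g = (\<chi> i j. cnj (g $ j $ i))"

definition mtrace :: "mat3 \<Rightarrow> complex" where
  "mtrace X = X $ 1 $ 1 + X $ 2 $ 2 + X $ 3 $ 3"

definition SU21 :: "mat3 set" where
  "SU21 = {g. det g = 1 \<and> conj_transpose g ** Jmat ** g = Jmat}"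

definition Kgrp :: "mat3 set" where
  "Kgrp = {g \<in> SU21. g $ 1 $ 3 = 0 \<and> g $ 2 $ 3 = 0 \<and> g $ 3 $ 1 = 0 \<and> g $ 3 $ 2 = 0}"

definition lie_g :: "mat3 set" where
  "lie_g = {X. mtrace X = 0 \<and> conj_transpose X ** Jmat + Jmat ** X = 0}"

definition nmat :: "complex \<Rightarrow> real \<Rightarrow> mat3" where
  "nmat b r = m3
     [[1 + \<i> * r - (cmod b)\<^sup>2 / 2, b, - \<i> * r + (cmod b)\<^sup>2 / 2],
      [- cnj b, 1, cnj b],
      [\<i> * r - (cmod b)\<^sup>2 / 2, b, 1 - \<i> * r + (cmod b)\<^sup>2 / 2]]"

definition chi :: "complex \<Rightarrow> complex \<Rightarrow> real \<Rightarrow> complex" where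
  "chi \<beta> b r = exp (2 * pi * \<i> * complex_of_real (Re (cnj \<beta> * b)))"

definition mpow :: "mat3 \<Rightarrow> nat \<Rightarrow> mat3" where
  "mpow X k = ((\<lambda>Y. Y ** X) ^^ k) (mat 1)"

definition mexp :: "mat3 \<Rightarrow> mat3" where
  "mexp X = (\<Sum>k. (1 / fact k) *\<^sub>R mpow X k)"

text \<open>functions on G are represented as functions on matrices vanishing off G\<close>

definition rdiff :: "mat3 \<Rightarrow> (mat3 \<Rightarrow> complex) \<Rightarrow> (mat3 \<Rightarrow> complex)" where
  "rdiff X F = (\<lambda>g. if g \<in> SU21
       then vector_derivative (\<lambda>t::real. F (g ** mexp (t *\<^sub>R X))) (at 0) else 0)"

definition rtrans :: "mat3 \<Rightarrow> (mat3 \<Rightarrow> complex) \<Rightarrow> (mat3 \<Rightarrow> complex)" where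
  "rtrans k F = (\<lambda>g. if g \<in> SU21 then F (g ** k) else 0)"

definition iter_rdiff :: "mat3 list \<Rightarrow> (mat3 \<Rightarrow> complex) \<Rightarrow> (mat3 \<Rightarrow> complex)" where
  "iter_rdiff Xs F = foldr rdiff Xs F"

definition smooth_on_G :: "(mat3 \<Rightarrow> complex) \<Rightarrow> bool" where
  "smooth_on_G F \<longleftrightarrow> (\<forall>Xs. set Xs \<subseteq> lie_g \<longrightarrow>
      continuous_on SU21 (iter_rdiff Xs F) \<and>
      (\<forall>X\<in>lie_g. \<forall>g\<in>SU21.
         (\<lambda>t::real. iter_rdiff Xs F (g ** mexp (t *\<^sub>R X))) differentiable (at 0)))"

definition cspan :: "(mat3 \<Rightarrow> complex) set \<Rightarrow> (mat3 \<Rightarrow> complex) set" where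
  "cspan S = {(\<lambda>g. \<Sum>f\<in>S. c f * f g) | c. True}"

definition K_finite :: "(mat3 \<Rightarrow> complex) \<Rightarrow> bool" where
  "K_finite F \<longleftrightarrow> (\<exists>S. finite S \<and> (\<forall>k\<in>Kgrp. rtrans k F \<in> cspan S))"

definition Fspace :: "complex \<Rightarrow> (mat3 \<Rightarrow> complex) set" where
  "Fspace \<beta> = {F. (\<forall>g. g \<notin> SU21 \<longrightarrow> F g = 0) \<and> smooth_on_G F \<and> K_finite F \<and>
      (\<forall>b r g. g \<in> SU21 \<longrightarrow> F (nmat b r ** g) = chi \<beta> b r * F g)}"

definition gK_iso :: "complex \<Rightarrow> complex \<Rightarrow> ((mat3 \<Rightarrow> complex) \<Rightarrow> (mat3 \<Rightarrow> complex)) \<Rightarrow> bool" where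
  "gK_iso \<beta> \<beta>' \<Phi> \<longleftrightarrow> bij_betw \<Phi> (Fspace \<beta>) (Fspace \<beta>') \<and>
     (\<forall>F\<in>Fspace \<beta>. \<forall>H\<in>Fspace \<beta>. \<forall>a::complex.
        \<Phi> (\<lambda>g. a * F g + H g) = (\<lambda>g. a * \<Phi> F g + \<Phi> H g)) \<and>
     (\<forall>k\<in>Kgrp. \<forall>F\<in>Fspace \<beta>. \<Phi> (rtrans k F) = rtrans k (\<Phi> F)) \<and>
     (\<forall>X\<in>lie_g. \<forall>F\<in>Fspace \<beta>. \<Phi> (rdiff X F) = rdiff X (\<Phi> F))"

end

theory Submission
  imports Defs
begin


definition hm :: "real \<Rightarrow> complex \<Rightarrow> mat3" where
  "hm \<rho> \<omega> = m3 [[(\<rho> + 1/\<rho>)/2 * \<omega>, 0, (\<rho> - 1/\<rho>)/2 * \<omega>],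
                  [0, 1/\<omega>^2, 0],
                  [(\<rho> - 1/\<rho>)/2 * \<omega>, 0, (\<rho> + 1/\<rho>)/2 * \<omega>]]"

lemma idx3_simps[simp]: "idx3 1 = 0" "idx3 2 = 1" "idx3 3 = 2"
  by (auto simp: idx3_def)

lemma m3_nth[simp]: "m3 xs $ i $ j = xs ! idx3 i ! idx3 j"
  by (simp add: m3_def)

lemma mat3_eqI: "(\<And>i j. i \<in> {1,2,3} \<Longrightarrow> j \<in> {1,2,3} \<Longrightarrow> A $ i $ j = B $ i $ j) \<Longrightarrow> A = (B::mat3)"
  by (metis UNIV_3 UNIV_I vec_eq_iff)

lemma mmult3: "((A::mat3) ** B) $ i $ j = A$i$1 * B$1$j + A$i$2 * B$2$j + A$i$3 * B$3$j"
  by (simp add: matrix_matrix_mult_def sum_3)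

lemma hm_conj:
  assumes "\<rho> > 0" "cmod \<omega> = 1"
  shows "hm \<rho> \<omega> ** nmat b r = nmat (\<rho> * \<omega>^3 * b) (\<rho>^2 * r) ** hm \<rho> \<omega>"
proof -
  have c: "cmod (\<rho> * \<omega>^3 * b) = \<rho> * cmod b" using assms by (simp add: norm_mult norm_power)
  have w: "\<omega> \<noteq> 0" using assms by auto
  have cw: "cnj \<omega> = 1/\<omega>" using assms w
    by (metis complex_norm_square mult.commute nonzero_eq_divide_eq numeral_One of_real_1 power_one)
  have rr: "complex_of_real \<rho> \<noteq> 0" using assms by auto
  show ?thesis
  apply (rule mat3_eqI)
  apply (auto simp: mmult3 hm_def nmat_def c cw)
  apply (simp_all add: field_simps w rr power2_eq_square power3_eq_cube)
  using assms apply (simp_all add: algebra_simps)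
  done qed


lemma hm_inv:
  assumes "\<rho> > 0" "\<omega> \<noteq> 0"
  shows "hm \<rho> \<omega> ** hm (1/\<rho>) (1/\<omega>) = mat 1"
proof -
  have rr: "complex_of_real \<rho> \<noteq> 0" using assms by auto
  show ?thesis
  apply (rule mat3_eqI)
  apply (auto simp: mmult3 hm_def mat_def)
  apply (simp_all add: field_simps assms rr power2_eq_square power3_eq_cube)
  using assms apply (simp_all add: algebra_simps)
  apply (simp_all add: add_divide_distrib[symmetric])
  done
qed

lemma hm_SU21:
  assumes "\<rho> > 0" "cmod \<omega> = 1"
  shows "hm \<rho> \<omega> \<in> SU21"
proof -
  have w: "\<omega> \<noteq> 0" using assms by auto
  have cw: "cnj \<omega> = 1/\<omega>" using assms w
    by (metis complex_norm_square mult.commute nonzero_eq_divide_eq of_real_1 power_one)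
  have rr: "complex_of_real \<rho> \<noteq> 0" using assms by auto
  have "det (hm \<rho> \<omega>) = 1"
    using assms unfolding det_3 by (simp add: hm_def field_simps w rr power2_eq_square power3_eq_cube)
  moreover have "conj_transpose (hm \<rho> \<omega>) ** Jmat ** hm \<rho> \<omega> = Jmat"
    apply (rule mat3_eqI)
    apply (auto simp: mmult3 hm_def Jmat_def conj_transpose_def cw)
    apply (simp_all add: field_simps w rr power2_eq_square power3_eq_cube)
    using assms apply (simp_all add: algebra_simps)
    done
  ultimately show ?thesis by (simp add: SU21_def)
qed



definition Lh :: "mat3 \<Rightarrow> (mat3 \<Rightarrow> complex) \<Rightarrow> (mat3 \<Rightarrow> complex)" where
  "Lh h F = (\<lambda>g. F (h ** g))"

lemma ct_mult: "conj_transpose (A ** B) = conj_transpose B ** conj_transpose A"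
  by (simp add: conj_transpose_def vec_eq_iff matrix_matrix_mult_def mult.commute)

lemma SU21_mult: "h \<in> SU21 \<Longrightarrow> g \<in> SU21 \<Longrightarrow> h ** g \<in> SU21"
  unfolding SU21_def
  by (auto simp: det_mul ct_mult matrix_mul_assoc)
     (metis matrix_mul_assoc)

locale invpair =
  fixes h h' :: mat3
  assumes hS: "h \<in> SU21" and h'S: "h' \<in> SU21"
    and hh': "h ** h' = mat 1" and h'h: "h' ** h = mat 1"
begin

lemma SU21_iff: "h ** g \<in> SU21 \<longleftrightarrow> g \<in> SU21"
proof
  assume "h ** g \<in> SU21"
  then have "h' ** (h ** g) \<in> SU21" using SU21_mult h'S by blast
  then show "g \<in> SU21" by (simp add: matrix_mul_assoc h'h)
qed (use SU21_mult hS in blast)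

lemma rdiff_Lh: "rdiff X (Lh h F) = Lh h (rdiff X F)"
  by (rule ext) (simp add: rdiff_def Lh_def SU21_iff matrix_mul_assoc)

lemma rtrans_Lh: "rtrans k (Lh h F) = Lh h (rtrans k F)"
  by (rule ext) (simp add: rtrans_def Lh_def SU21_iff matrix_mul_assoc)

lemma iter_rdiff_Lh: "iter_rdiff Xs (Lh h F) = Lh h (iter_rdiff Xs F)"
  by (induction Xs) (simp_all add: iter_rdiff_def rdiff_Lh)

lemma cont_mult: "continuous_on A (\<lambda>g::mat3. h ** g)"
  unfolding matrix_matrix_mult_def
  by (intro continuous_intros)

lemma smooth_Lh: "smooth_on_G F \<Longrightarrow> smooth_on_G (Lh h F)"
  unfolding smooth_on_G_def
proof (intro allI impI conjI ballI)
  fix Xs assume F: "\<forall>Xs. set Xs \<subseteq> lie_g \<longrightarrow>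
         continuous_on SU21 (iter_rdiff Xs F) \<and>
         (\<forall>X\<in>lie_g. \<forall>g\<in>SU21. (\<lambda>t. iter_rdiff Xs F (g ** mexp (t *\<^sub>R X))) differentiable at 0)"
    and Xs: "set Xs \<subseteq> lie_g"
  have c: "continuous_on SU21 (iter_rdiff Xs F)" using F Xs by blast
  have "continuous_on SU21 (iter_rdiff Xs F \<circ> (\<lambda>g. h ** g))"
    apply (rule continuous_on_compose[OF cont_mult])
    apply (rule continuous_on_subset[OF c])
    using SU21_iff by auto
  then show "continuous_on SU21 (iter_rdiff Xs (Lh h F))"
    unfolding iter_rdiff_Lh by (simp add: Lh_def o_def)
  fix X g assume X: "X \<in> lie_g" and g: "g \<in> SU21"
  have "h ** g \<in> SU21" using g SU21_iff by blast
  then have "(\<lambda>t. iter_rdiff Xs F ((h ** g) ** mexp (t *\<^sub>R X))) differentiable at 0"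
    using F Xs X by blast
  then show "(\<lambda>t. iter_rdiff Xs (Lh h F) (g ** mexp (t *\<^sub>R X))) differentiable at 0"
    unfolding iter_rdiff_Lh by (simp add: Lh_def matrix_mul_assoc)
qed

lemma inj_Lh: "inj (Lh h)"
proof (rule injI)
  fix F1 F2 assume "Lh h F1 = Lh h F2"
  then have "\<And>g. F1 (h ** (h' ** g)) = F2 (h ** (h' ** g))" unfolding Lh_def by metis
  then show "F1 = F2" by (simp add: matrix_mul_assoc hh' fun_eq_iff)
qed

lemma Lh_cspan: "G \<in> cspan S \<Longrightarrow> finite S \<Longrightarrow> Lh h G \<in> cspan (Lh h ` S)"
proof -
  assume "G \<in> cspan S" "finite S"
  then obtain c where G: "G = (\<lambda>g. \<Sum>f\<in>S. c f * f g)" unfolding cspan_def by blast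
  define c' where "c' = (\<lambda>f'. c (inv_into S (Lh h) f'))"
  have ij: "inj_on (Lh h) S" using inj_Lh by (meson inj_on_subset subset_UNIV)
  have "(\<lambda>g. \<Sum>f'\<in>Lh h ` S. c' f' * f' g) = (\<lambda>g. \<Sum>f\<in>S. c' (Lh h f) * Lh h f g)"
    by (simp add: sum.reindex[OF ij])
  also have "\<dots> = (\<lambda>g. \<Sum>f\<in>S. c f * Lh h f g)"
    by (intro ext sum.cong refl) (simp add: c'_def inv_into_f_f[OF ij])
  also have "\<dots> = Lh h G"
    unfolding G by (simp add: Lh_def)
  finally have "Lh h G = (\<lambda>g. \<Sum>f'\<in>Lh h ` S. c' f' * f' g)" by simp
  then show ?thesis unfolding cspan_def by blast
qed

lemma Kfin_Lh: "K_finite F \<Longrightarrow> K_finite (Lh h F)"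
  unfolding K_finite_def
proof (elim exE conjE)
  fix S assume S: "finite S" "\<forall>k\<in>Kgrp. rtrans k F \<in> cspan S"
  show "\<exists>S. finite S \<and> (\<forall>k\<in>Kgrp. rtrans k (Lh h F) \<in> cspan S)"
    apply (rule exI[of _ "Lh h ` S"])
    using S Lh_cspan by (simp add: rtrans_Lh)
qed

lemma Fspace_Lh:
  assumes F: "F \<in> Fspace \<beta>"
    and conj: "\<And>b r. h ** nmat b r = nmat (\<mu> b) (s r) ** h"
    and ch: "\<And>b r. chi \<beta> (\<mu> b) (s r) = chi \<beta>' b r"
  shows "Lh h F \<in> Fspace \<beta>'"
proof -
  have F0: "\<And>g. g \<notin> SU21 \<Longrightarrow> F g = 0" and Fs: "smooth_on_G F" and Fk: "K_finite F"
    and Fn: "\<And>b r g. g \<in> SU21 \<Longrightarrow> F (nmat b r ** g) = chi \<beta> b r * F g"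
    using F unfolding Fspace_def by auto
  have "\<forall>g. g \<notin> SU21 \<longrightarrow> Lh h F g = 0" using F0 SU21_iff by (simp add: Lh_def)
  moreover have "\<forall>b r g. g \<in> SU21 \<longrightarrow> Lh h F (nmat b r ** g) = chi \<beta>' b r * Lh h F g"
  proof (intro allI impI)
    fix b r g assume g: "g \<in> SU21"
    then have hg: "h ** g \<in> SU21" using SU21_iff by blast
    have "h ** (nmat b r ** g) = nmat (\<mu> b) (s r) ** (h ** g)"
      by (metis conj matrix_mul_assoc)
    then have "Lh h F (nmat b r ** g) = F (nmat (\<mu> b) (s r) ** (h ** g))"
      by (simp add: Lh_def)
    also have "\<dots> = chi \<beta>' b r * Lh h F g" using Fn[OF hg] ch by (simp add: Lh_def)
    finally show "Lh h F (nmat b r ** g) = chi \<beta>' b r * Lh h F g" .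
  qed
  ultimately show ?thesis using smooth_Lh[OF Fs] Kfin_Lh[OF Fk] unfolding Fspace_def by blast
qed

end



lemma Lh_Lh: "Lh a (Lh b F) = Lh (b ** a) F"
  by (simp add: Lh_def fun_eq_iff matrix_mul_assoc)

lemma Lh_one: "Lh (mat 1) F = F"
  by (simp add: Lh_def fun_eq_iff)

theorem proposition8p2:
  fixes \<beta> \<beta>' :: complex
  assumes "\<beta> \<noteq> 0" and "\<beta>' \<noteq> 0"
  shows "\<exists>\<Phi>. gK_iso \<beta> \<beta>' \<Phi>"
proof -
  define lam where "lam = cnj \<beta>' / cnj \<beta>"
  have l0: "lam \<noteq> 0" using assms by (simp add: lam_def)
  define \<rho> where "\<rho> = cmod lam"
  define \<omega> where "\<omega> = cis (Arg lam / 3)"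
  have r0: "\<rho> > 0" using l0 by (simp add: \<rho>_def)
  have w1: "cmod \<omega> = 1" by (simp add: \<omega>_def)
  have w0: "\<omega> \<noteq> 0" using w1 by auto
  have w3: "\<omega>^3 = sgn lam" 
  proof -
    have "cis (Arg lam / 3) ^ 3 = cis (real 3 * (Arg lam / 3))" by (rule Complex.DeMoivre)
    then show ?thesis unfolding \<omega>_def using cis_Arg[OF l0] by simp
  qed
  have lam: "complex_of_real \<rho> * \<omega>^3 = lam" unfolding w3 \<rho>_def
    using l0 by (simp add: sgn_div_norm scaleR_conv_of_real)
  have lam': "complex_of_real (1/\<rho>) * (1/\<omega>)^3 = 1/lam"
    using lam by (simp add: power_one_over field_simps)
  define h where "h = hm \<rho> \<omega>"
  define h' where "h' = hm (1/\<rho>) (1/\<omega>)"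
  have w1': "cmod (1/\<omega>) = 1" using w1 by (simp add: norm_divide)
  have hS: "h \<in> SU21" unfolding h_def using hm_SU21 r0 w1 by blast
  have h'S: "h' \<in> SU21" unfolding h'_def using hm_SU21 r0 w1' by simp
  have hh': "h ** h' = mat 1" unfolding h_def h'_def using hm_inv r0 w0 by blast
  have h'h: "h' ** h = mat 1" unfolding h_def h'_def using hm_inv[of "1/\<rho>" "1/\<omega>"] r0 w0 by simp
  interpret A: invpair h h' using hS h'S hh' h'h by unfold_locales
  interpret B: invpair h' h using hS h'S hh' h'h by unfold_locales
  have c1: "h ** nmat b r = nmat (lam * b) (\<rho>^2 * r) ** h" for b r
    unfolding h_def using hm_conj[OF r0 w1, of b r] lam by simp
  have c2: "h' ** nmat b r = nmat (1/lam * b) ((1/\<rho>)^2 * r) ** h'" for b r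
  proof -
    have "h' ** nmat b r = nmat (complex_of_real (1/\<rho>) * (1/\<omega>)^3 * b) ((1/\<rho>)^2*r) ** h'"
      unfolding h'_def by (rule hm_conj) (use r0 w1' in auto)
    then show ?thesis by (simp only: lam')
  qed
  have ch1: "chi \<beta> (lam * b) (\<rho>^2 * r) = chi \<beta>' b r" for b r
    unfolding chi_def lam_def using assms by simp
  have ch2: "chi \<beta>' (1/lam * b) ((1/\<rho>)^2 * r) = chi \<beta> b r" for b r
    unfolding chi_def lam_def using assms by simp
  have im1: "Lh h F \<in> Fspace \<beta>'" if "F \<in> Fspace \<beta>" for F
    using A.Fspace_Lh[OF that c1 ch1] .
  have im2: "Lh h' F \<in> Fspace \<beta>" if "F \<in> Fspace \<beta>'" for F
    using B.Fspace_Lh[OF that c2 ch2] .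
  have "gK_iso \<beta> \<beta>' (Lh h)"
    unfolding gK_iso_def
  proof (intro conjI ballI allI)
    show "bij_betw (Lh h) (Fspace \<beta>) (Fspace \<beta>')"
      by (rule bij_betw_byWitness[where f' = "Lh h'"])
         (use im1 im2 in \<open>auto simp: Lh_Lh hh' h'h Lh_one\<close>)
  next
    fix F H a show "Lh h (\<lambda>g. a * F g + H g) = (\<lambda>g. a * Lh h F g + Lh h H g)"
      by (simp add: Lh_def)
  next
    fix k F show "Lh h (rtrans k F) = rtrans k (Lh h F)" by (simp add: A.rtrans_Lh)
  next
    fix X F show "Lh h (rdiff X F) = rdiff X (Lh h F)" by (simp add: A.rdiff_Lh)
  qed
  then show ?thesis by blast
qed

end
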